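(* For any finite multiset $C$ of vectors in $\mathbb{Z}^d$, a vector $c\in\mathbb{R}^d$ minimizing $\sum_{x\in C}\operatorname{dist}_\infty(x,c)$ can always be chosen from $\frac{1}{2}\mathbb{Z}^d$, i.e., with every coordinate an integer or a half-integer.
   Context: $\operatorname{dist}_\infty(x,y)=\max_{1\le i\le d}|x[i]-y[i]|$. *)

theory Defs
  imports "HOL-Analysis.Analysis" "HOL-Library.Multiset"
begin

definition dist_inf :: "real^'d \<Rightarrow> real^'d \<Rightarrow> real" where
  "dist_inf x y = Max (range (\<lambda>i. \<bar>x $ i - y $ i\<bar>))"

definition int_vec :: "int^'d \<Rightarrow> real^'d" where
  "int_vec x = (\<chi> i. real_of_int (x $ i))"

definition inf_cost :: "(int^'d) multiset \<Rightarrow> real^'d \<Rightarrow> real" where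
  "inf_cost C c = (\<Sum>x\<in>#C. dist_inf (int_vec x) c)"

end

theory Submission
  imports Defs
begin


definition rr :: "real \<Rightarrow> real \<Rightarrow> real" where
  "rr th s = (if s < th then 0 else if s \<le> 1 - th then 1/2 else 1)"

definition rho :: "real \<Rightarrow> real \<Rightarrow> real" where
  "rho th c = of_int \<lfloor>c\<rfloor> + rr th (frac c)"

lemma rr_range: "0 \<le> rr th s \<and> rr th s \<le> 1"
  by (simp add: rr_def)

lemma rr_mono: "s \<le> t \<Longrightarrow> rr th s \<le> rr th t"
  by (simp add: rr_def)

lemma rr_sym: "th \<le> 1/2 \<Longrightarrow> 0 < f \<Longrightarrow> f < 1 \<Longrightarrow> rr th (1 - f) = 1 - rr th f"
  by (auto simp add: rr_def)

lemma rr_zero: "0 < th \<Longrightarrow> rr th 0 = 0"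
  by (simp add: rr_def)

lemma rho_mono: "mono (rho th)"
proof (rule monoI)
  fix a b :: real assume ab: "a \<le> b"
  have fl: "\<lfloor>a\<rfloor> \<le> \<lfloor>b\<rfloor>" using ab floor_mono by blast
  show "rho th a \<le> rho th b"
  proof (cases "\<lfloor>a\<rfloor> = \<lfloor>b\<rfloor>")
    case True
    then have "frac a \<le> frac b" using ab by (simp add: frac_def)
    then show ?thesis using True rr_mono by (simp add: rho_def)
  next
    case False
    then have "real_of_int \<lfloor>a\<rfloor> + 1 \<le> real_of_int \<lfloor>b\<rfloor>" using fl by linarith
    then show ?thesis using rr_range[of th "frac a"] rr_range[of th "frac b"] by (simp add: rho_def)
  qed
qed

lemma rho_half: "2 * rho th c \<in> \<int>"
proof -
  have "2 * rr th s \<in> \<int>" for s by (simp add: rr_def)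
  then show ?thesis unfolding rho_def by (simp add: distrib_left)
qed

lemma rho_dist:
  assumes th: "0 < th" "th \<le> 1/2"
  shows "\<bar>real_of_int x - rho th c\<bar> = rho th \<bar>real_of_int x - c\<bar>"
proof -
  define m where "m = \<lfloor>c\<rfloor>"
  define f where "f = frac c"
  have c: "c = of_int m + f" by (simp add: m_def f_def frac_def)
  have f01: "0 \<le> f" "f < 1" by (auto simp: f_def frac_lt_1)
  have r01: "0 \<le> rr th f" "rr th f \<le> 1" using rr_range by auto
  have rc: "rho th c = of_int m + rr th f" by (simp add: rho_def m_def f_def)
  show ?thesis
  proof (cases "x \<le> m")
    case True
    have d: "\<bar>real_of_int x - c\<bar> = of_int (m - x) + f" using True c f01 by simp
    have "\<lfloor>of_int (m - x) + f\<rfloor> = m - x" using f01 by (simp add: floor_eq_iff)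
    then have "rho th (of_int (m - x) + f) = of_int (m - x) + rr th f"
      by (simp add: rho_def frac_def)
    then show ?thesis using d rc r01 True by simp
  next
    case False
    show ?thesis
    proof (cases "f = 0")
      case True
      have d: "\<bar>real_of_int x - c\<bar> = of_int (x - m)" using False c True by simp
      have "rho th (of_int (x - m)) = of_int (x - m)" using rr_zero[OF th(1)] by (simp add: rho_def del: of_int_diff)
      then show ?thesis using d rc True rr_zero[OF th(1)] False by simp
    next
      case f0: False
      have d: "\<bar>real_of_int x - c\<bar> = of_int (x - m - 1) + (1 - f)" using False c f01 by simp
      have "\<lfloor>of_int (x - m - 1) + (1 - f)\<rfloor> = x - m - 1" using f01 f0 by (simp add: floor_eq_iff)
      then have "rho th (of_int (x - m - 1) + (1 - f)) = of_int (x - m - 1) + rr th (1 - f)"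
        by (simp add: rho_def frac_def)
      moreover have "rr th (1 - f) = 1 - rr th f" using f01 f0 rr_sym th by auto
      ultimately show ?thesis using d rc r01 False by simp
    qed
  qed
qed



definition pr :: "real set \<Rightarrow> real \<Rightarrow> real" where
  "pr T t = Max (insert 0 {t'\<in>T. t' < t})"

lemma pr_props:
  assumes fin: "finite T" and pos: "T \<subseteq> {0<..}" and t: "t \<in> T"
  shows "pr T t \<in> insert 0 T" "pr T t < t" "\<And>t'. t' \<in> T \<Longrightarrow> t' < t \<Longrightarrow> t' \<le> pr T t"
    "0 \<le> pr T t"
proof -
  have f: "finite (insert 0 {t'\<in>T. t' < t})" using fin by simp
  have "Max (insert 0 {t'\<in>T. t' < t}) \<in> insert 0 {t'\<in>T. t' < t}"
    using Max_in[OF f] by blast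
  then show "pr T t \<in> insert 0 T" unfolding pr_def by blast
  have "0 < t" using pos t by auto
  then show "pr T t < t" unfolding pr_def using f by (simp add: Max_less_iff)
  show "\<And>t'. t' \<in> T \<Longrightarrow> t' < t \<Longrightarrow> t' \<le> pr T t" unfolding pr_def
    using f by (intro Max_ge) auto
  show "0 \<le> pr T t" unfolding pr_def using f by (intro Max_ge) auto
qed

lemma tele:
  assumes fin: "finite T" and pos: "T \<subseteq> {0<..}" and u: "u \<in> insert 0 T"
  shows "(\<Sum>t\<in>{t\<in>T. t \<le> u}. t - pr T t) = u"
proof (cases "u = 0")
  case True
  then have "{t\<in>T. t \<le> u} = {}" using pos by auto
  then show ?thesis using True by (metis (no_types) sum.empty)
next
  case False
  then have uT: "u \<in> T" using u by auto
  define S where "S = {t\<in>T. t \<le> u}"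
  have finS: "finite S" using fin by (simp add: S_def)
  have uS: "u \<in> S" using uT by (simp add: S_def)
  have S0: "0 \<notin> S" using pos by (auto simp: S_def)
  have bij: "bij_betw (pr T) S (insert 0 S - {u})"
  proof (rule bij_betw_imageI)
    show "inj_on (pr T) S"
    proof (rule linorder_inj_onI)
      fix a b assume "a < b" "a \<in> S" "b \<in> S"
      then have "pr T a < a" "a \<le> pr T b" using pr_props[OF fin pos] by (auto simp: S_def)
      then show "pr T a \<noteq> pr T b" by simp
    qed auto
    show "pr T ` S = insert 0 S - {u}"
    proof
      show "pr T ` S \<subseteq> insert 0 S - {u}"
      proof
        fix v assume "v \<in> pr T ` S"
        then obtain t where t: "t \<in> S" "v = pr T t" by auto
        then have tT: "t \<in> T" "t \<le> u" by (auto simp: S_def)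
        have "v \<in> insert 0 T" "v < t" using pr_props[OF fin pos tT(1)] t by auto
        then show "v \<in> insert 0 S - {u}" using tT by (auto simp: S_def)
      qed
      show "insert 0 S - {u} \<subseteq> pr T ` S"
      proof
        fix v assume v: "v \<in> insert 0 S - {u}"
        then have vu: "v < u" "0 \<le> v" using pos False uT by (auto simp: S_def)
        have vT: "v = 0 \<or> v \<in> T" using v by (auto simp: S_def)
        define A where "A = {t\<in>T. v < t}"
        have finA: "finite A" "A \<noteq> {}" using fin uT vu by (auto simp: A_def)
        define t where "t = Min A"
        have tA: "t \<in> A" using Min_in[OF finA] t_def by simp
        have tu: "t \<le> u" using finA uT vu by (auto simp: t_def A_def)
        have tT: "t \<in> T" "v < t" using tA by (auto simp: A_def)
        have le1: "v \<le> pr T t"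
          using vT pr_props(3,4)[OF fin pos tT(1)] tT(2) by auto
        have le2: "pr T t \<le> v"
        proof -
          have "\<forall>y\<in>insert 0 {t'\<in>T. t' < t}. y \<le> v"
          proof
            fix y assume y: "y \<in> insert 0 {t'\<in>T. t' < t}"
            show "y \<le> v"
            proof (rule ccontr)
              assume "\<not> y \<le> v"
              then have "y \<in> A" "y < t" using y vu by (auto simp: A_def)
              then show False using Min_le[OF finA(1)] t_def by fastforce
            qed
          qed
          then show ?thesis unfolding pr_def using fin by (simp add: Max_le_iff)
        qed
        have "t \<in> S" using tT tu by (simp add: S_def)
        then show "v \<in> pr T ` S" using le1 le2 by force
      qed
    qed
  qed
  have "(\<Sum>t\<in>S. pr T t) = (\<Sum>v\<in>insert 0 S - {u}. v)"
    using sum.reindex_bij_betw[OF bij, of "\<lambda>v. v"] by simp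
  also have "\<dots> = (\<Sum>v\<in>insert 0 S. v) - u"
    using finS uS by (simp add: sum_diff1)
  also have "\<dots> = (\<Sum>v\<in>S. v) - u" using finS S0 by simp
  finally have "(\<Sum>t\<in>S. pr T t) = (\<Sum>v\<in>S. v) - u" .
  then show ?thesis unfolding S_def[symmetric] by (simp add: sum_subtractf)
qed



lemma sum_mset_swap_set:
  fixes h :: "'b \<Rightarrow> 'a \<Rightarrow> real"
  shows "(\<Sum>t\<in>T. w t * (\<Sum>x\<in>#C. h t x)) = (\<Sum>x\<in>#C. \<Sum>t\<in>T. w t * h t x)"
  by (induction C) (simp_all add: distrib_left sum.distrib)

lemma sum_mset_zero:
  fixes f :: "'a \<Rightarrow> real"
  assumes "\<And>x. x \<in># C \<Longrightarrow> f x = 0"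
  shows "(\<Sum>x\<in>#C. f x) = 0"
proof -
  have "image_mset f C = image_mset (\<lambda>_. 0) C" using assms by (intro image_mset_cong) auto
  then show ?thesis by simp
qed

lemma avg:
  fixes C :: "'a multiset" and g :: "'a \<Rightarrow> real"
  assumes g: "\<And>x. 0 \<le> g x \<and> g x < 1"
  shows "\<exists>th. 0 < th \<and> th \<le> 1/2 \<and> (\<Sum>x\<in>#C. rr th (g x) - g x) \<le> 0"
proof -
  define u where "u x = min (g x) (1 - g x)" for x
  define sg :: "'a \<Rightarrow> real" where "sg x = (if g x \<le> 1/2 then 1 else -1)" for x
  define h where "h t x = sg x * ((if t \<le> u x then 1/2 else 0) - u x)" for t x
  have pw: "rr th (g x) - g x = h th x" if "0 < th" "th \<le> 1/2" for th x
    using that g[of x] unfolding h_def sg_def u_def rr_def by auto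
  define T where "T = insert (1/2) ((u ` set_mset C) \<inter> {0<..})"
  have finT: "finite T" by (simp add: T_def)
  have posT: "T \<subseteq> {0<..}" by (auto simp: T_def)
  have T12: "T \<subseteq> {0<..1/2}" using g by (auto simp: T_def u_def min_def)
  have hT: "1/2 \<in> T" by (simp add: T_def)
  have uT: "u x \<in> insert 0 T" if "x \<in># C" for x
  proof -
    have "0 \<le> u x" using g[of x] by (simp add: u_def)
    then show ?thesis using that by (cases "u x = 0") (auto simp: T_def)
  qed
  define w where "w t = t - pr T t" for t
  have wpos: "0 < w t" if "t \<in> T" for t using pr_props(2)[OF finT posT that] by (simp add: w_def)
  have wsum: "(\<Sum>t\<in>T. w t) = 1/2"
  proof -
    have "{t\<in>T. t \<le> 1/2} = T" using T12 by auto
    then show ?thesis using tele[OF finT posT, of "1/2"] hT unfolding w_def by simp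
  qed
  have wsum2: "(\<Sum>t\<in>T. if t \<le> u x then w t else 0) = u x" if "x \<in># C" for x
    using tele[OF finT posT uT[OF that]] finT unfolding w_def by (simp add: sum.inter_filter[symmetric])
  have zero: "(\<Sum>t\<in>T. w t * (\<Sum>x\<in>#C. h t x)) = 0"
  proof -
    have "(\<Sum>t\<in>T. w t * h t x) = 0" if "x \<in># C" for x
    proof -
      have "(\<Sum>t\<in>T. w t * h t x) = sg x * (1/2 * (\<Sum>t\<in>T. if t \<le> u x then w t else 0) - u x * (\<Sum>t\<in>T. w t))"
      proof -
        have "w t * h t x = sg x * (1/2 * (if t \<le> u x then w t else 0) - u x * w t)" for t
          unfolding h_def by (simp add: algebra_simps)
        then have "(\<Sum>t\<in>T. w t * h t x) = (\<Sum>t\<in>T. sg x * (1/2 * (if t \<le> u x then w t else 0) - u x * w t))"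
          by simp
        also have "\<dots> = sg x * (1/2 * (\<Sum>t\<in>T. if t \<le> u x then w t else 0) - u x * (\<Sum>t\<in>T. w t))"
          by (simp add: sum_distrib_left[symmetric] sum_subtractf sum_divide_distrib[symmetric])
        finally show ?thesis .
      qed
      then show ?thesis using wsum wsum2[OF that] by simp
    qed
    then show ?thesis by (simp add: sum_mset_swap_set sum_mset_zero)
  qed
  have "\<exists>t\<in>T. (\<Sum>x\<in>#C. h t x) \<le> 0"
  proof (rule ccontr)
    assume "\<not> ?thesis"
    then have "\<forall>t\<in>T. 0 < w t * (\<Sum>x\<in>#C. h t x)" using wpos by auto
    then have "0 < (\<Sum>t\<in>T. w t * (\<Sum>x\<in>#C. h t x))"
      using finT hT by (intro sum_pos) auto
    then show False using zero by simp
  qed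
  then obtain t where t: "t \<in> T" "(\<Sum>x\<in>#C. h t x) \<le> 0" by blast
  have t12: "0 < t" "t \<le> 1/2" using t T12 by auto
  have "image_mset (\<lambda>x. rr t (g x) - g x) C = image_mset (h t) C"
    using pw[OF t12] by (intro image_mset_cong) auto
  then show ?thesis using t t12 by (intro exI[of _ t]) simp
qed



lemma Ints_nonneg_Nats: "(y::real) \<in> \<int> \<Longrightarrow> 0 \<le> y \<Longrightarrow> y \<in> \<nat>"
  by (auto simp: Nats_altdef1 elim!: Ints_cases)

lemma dist_rho:
  assumes th: "0 < th" "th \<le> 1/2"
  shows "dist_inf (int_vec x) (\<chi> i. rho th (c$i)) = rho th (dist_inf (int_vec x) c)"
proof -
  have "range (\<lambda>i. \<bar>int_vec x $ i - (\<chi> i. rho th (c$i)) $ i\<bar>) = rho th ` range (\<lambda>i. \<bar>int_vec x $ i - c $ i\<bar>)"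
    using rho_dist[OF th] by (auto simp: int_vec_def image_comp)
  moreover have "rho th (Max (range (\<lambda>i. \<bar>int_vec x $ i - c $ i\<bar>))) = Max (rho th ` range (\<lambda>i. \<bar>int_vec x $ i - c $ i\<bar>))"
    by (rule mono_Max_commute[OF rho_mono]) auto
  ultimately show ?thesis unfolding dist_inf_def by simp
qed

lemma sum_mset_diff:
  fixes f g :: "'a \<Rightarrow> real"
  shows "(\<Sum>x\<in>#C. f x) - (\<Sum>x\<in>#C. g x) = (\<Sum>x\<in>#C. f x - g x)"
  by (induction C) simp_all

lemma round_ex:
  fixes C :: "(int^'d) multiset" and c :: "real^'d"
  shows "\<exists>c'. (\<forall>i. 2 * c' $ i \<in> \<int>) \<and> inf_cost C c' \<le> inf_cost C c"
proof -
  define D where "D x = dist_inf (int_vec x) c" for x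
  have "\<exists>th. 0 < th \<and> th \<le> 1/2 \<and> (\<Sum>x\<in>#C. rr th (frac (D x)) - frac (D x)) \<le> 0"
    by (rule avg) (simp add: frac_lt_1)
  then obtain th where th: "0 < th" "th \<le> 1/2"
    "(\<Sum>x\<in>#C. rr th (frac (D x)) - frac (D x)) \<le> 0" by (elim exE conjE)
  define c' where "c' = (\<chi> i. rho th (c$i))"
  have eq: "dist_inf (int_vec x) c' = rho th (D x)" for x
    unfolding c'_def D_def by (rule dist_rho[OF th(1,2)])
  have e1: "inf_cost C c' = (\<Sum>x\<in>#C. rho th (D x))"
    unfolding inf_cost_def eq by (rule refl)
  have e2: "inf_cost C c = (\<Sum>x\<in>#C. D x)"
    unfolding inf_cost_def D_def by (rule refl)
  have e3: "rho th d - d = rr th (frac d) - frac d" for d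
    unfolding rho_def frac_def by simp
  have "inf_cost C c' - inf_cost C c = (\<Sum>x\<in>#C. rho th (D x) - D x)"
    unfolding e1 e2 by (rule sum_mset_diff)
  also have "\<dots> = (\<Sum>x\<in>#C. rr th (frac (D x)) - frac (D x))"
    unfolding e3 by (rule refl)
  finally have "inf_cost C c' \<le> inf_cost C c" using th(3) by simp
  moreover have "\<forall>i. 2 * c' $ i \<in> \<int>" by (simp add: c'_def rho_half)
  ultimately show ?thesis by blast
qed

lemma half_cost:
  fixes C :: "(int^'d) multiset" and c :: "real^'d"
  assumes h: "\<forall>i. 2 * c $ i \<in> \<int>"
  shows "2 * inf_cost C c \<in> \<nat>"
proof -
  have trm: "2 * dist_inf (int_vec x) c \<in> \<nat>" for x
  proof -
    have "dist_inf (int_vec x) c \<in> range (\<lambda>i. \<bar>int_vec x $ i - c $ i\<bar>)"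
      unfolding dist_inf_def by (rule Max_in) auto
    then obtain i where i: "dist_inf (int_vec x) c = \<bar>int_vec x $ i - c $ i\<bar>" by auto
    have "2 * \<bar>int_vec x $ i - c $ i\<bar> = \<bar>2 * of_int (x $ i) - 2 * c $ i\<bar>"
      proof -
        have "\<bar>2 * of_int (x $ i) - 2 * c $ i\<bar> = \<bar>2 * (int_vec x $ i - c $ i)\<bar>"
          by (simp add: int_vec_def algebra_simps)
        then show ?thesis by (simp only: abs_mult)
      qed
    also have "\<dots> \<in> \<int>" using h by (intro Ints_abs Ints_diff; simp?)
    finally show ?thesis using i by (intro Ints_nonneg_Nats) auto
  qed
  show ?thesis unfolding inf_cost_def
  proof (induction C)
    case empty then show ?case by simp
  next
    case (add x C)
    then show ?case using trm[of x] by (simp add: distrib_left Nats_add)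
  qed
qed

theorem claim8:
  fixes C :: "(int^'d) multiset"
  shows "\<exists>c :: real^'d. (\<forall>i. 2 * c $ i \<in> \<int>) \<and> (\<forall>c'. inf_cost C c \<le> inf_cost C c')"
proof -
  define P where "P n \<longleftrightarrow> (\<exists>c :: real^'d. (\<forall>i. 2 * c $ i \<in> \<int>) \<and> 2 * inf_cost C c = of_nat n)" for n
  have Pc: "\<exists>n. P n \<and> 2 * inf_cost C c = of_nat n" if hc: "\<forall>i. 2 * c $ i \<in> \<int>" for c :: "real^'d"
  proof -
    obtain n where "2 * inf_cost C c = of_nat n" using half_cost[OF hc] by (auto elim!: Nats_cases)
    then show ?thesis using hc unfolding P_def by blast
  qed
  have "\<forall>i. 2 * (0::real^'d) $ i \<in> \<int>" by simp
  then obtain n0 where "P n0" using Pc by blast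
  define n where "n = (LEAST n. P n)"
  have "P n" unfolding n_def by (rule LeastI) fact
  then obtain c where c: "\<forall>i. 2 * c $ i \<in> \<int>" "2 * inf_cost C c = of_nat n" unfolding P_def by blast
  have "inf_cost C c \<le> inf_cost C c'" for c'
  proof -
    obtain c'' where c'': "\<forall>i. 2 * c'' $ i \<in> \<int>" "inf_cost C c'' \<le> inf_cost C c'"
      using round_ex by blast
    obtain m where m: "P m" "2 * inf_cost C c'' = of_nat m" using Pc[OF c''(1)] by blast
    have "n \<le> m" unfolding n_def using m(1) by (rule Least_le)
    then have "inf_cost C c \<le> inf_cost C c''" using c(2) m(2) by simp
    then show ?thesis using c''(2) by simp
  qed
  then show ?thesis using c(1) by blast
qed

end
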